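(* For $n\ge1$ let \[ \mathbf{M}_n=\begin{bmatrix} \frac{n}{2(2n+1)} & \frac{-3}{2n(2n+1)} & \frac{3}{2n^{3}}\\ 0 & \frac{n}{2(2n+1)} & \frac{3}{2n}\\ 0 & 0 & 1 \end{bmatrix}. \] Then the limit $\lim_{N\to\infty}\mathbf{M}_1\mathbf{M}_2\cdots\mathbf{M}_N$ exists and equals \[ \begin{bmatrix}0 & 0 & \zeta(4)\\ 0 & 0 & \zeta(2)\\ 0&0&1\end{bmatrix}. \]
   Context: $\zeta$ denotes the Riemann zeta function. *)

theory Defs
  imports "HOL-Analysis.Analysis"
begin

definition riemann_zeta :: "real \<Rightarrow> real" where
  "riemann_zeta s = (\<Sum>n. 1 / (real (Suc n)) powr s)"

definition Mmat :: "nat \<Rightarrow> real^3^3" where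
  "Mmat n = (let m = real n in
     vector [vector [m / (2*(2*m+1)), -3 / (2*m*(2*m+1)), 3 / (2*m^3)],
             vector [0, m / (2*(2*m+1)), 3 / (2*m)],
             vector [0, 0, 1]])"

fun Mprod :: "nat \<Rightarrow> real^3^3" where
  "Mprod 0 = mat 1"
| "Mprod (Suc N) = Mprod N ** Mmat (Suc N)"

end

theory Submission imports Defs begin

definition tt :: "nat \<Rightarrow> nat \<Rightarrow> real" where
  "tt N k = (fact N / (\<Prod>j\<le>N. real (k+j)))^2"
definition hh :: "nat \<Rightarrow> nat \<Rightarrow> real" where
  "hh N k = (\<Sum>j\<le>N. 1/(real (k+j))^2)"
definition GG :: "nat \<Rightarrow> nat \<Rightarrow> real" where
  "GG N k = tt N k * (real k + (3*real N+1)/2)"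
definition H2 :: "nat \<Rightarrow> real" where
  "H2 n = (\<Sum>j<n. 1/(real (Suc j))^2)"

lemma P1_alg: assumes "z \<noteq> 0" "(x::real) \<noteq> 0" "m \<noteq> 0" "z = x + m" "m = y + 1"
 shows "(2*y+1)*T - m/2*(T*m^2/z^2) = T*(x+(3*y+1)/2) - T*x^2/z^2*((x+1)+(3*y+1)/2)"
  using assms(1-3) apply (simp add: field_simps) using assms(4,5) by algebra

lemma P2_alg: assumes "z \<noteq> 0" "(x::real) \<noteq> 0" "m \<noteq> 0" "z = x + m" "m = y + 1"
 shows "(2*y+1)*T*h - m/2*(T*m^2/z^2)*(h + 1/z^2) + 2/m*(T*m^2/z^2)
   = T*(x+(3*y+1)/2)*h - T*x^2/z^2*((x+1)+(3*y+1)/2)*(h - 1/x^2 + 1/z^2)"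
  using assms(1-3) apply (simp add: field_simps) using assms(4,5) by algebra

lemma prod_shift: "(\<Prod>j\<le>N. real (Suc k+j)) * real k = (\<Prod>j\<le>N. real (k+j)) * real (k + Suc N)"
  by (induction N) (simp_all add: algebra_simps)

lemma prod_ge: "(\<Prod>j\<le>N. real (k+j)) \<ge> real k * fact N"
proof (induction N)
  case 0 then show ?case by simp
next
  case (Suc N)
  have "real k * fact (Suc N) = (real k * fact N) * real (Suc N)" by (simp add: algebra_simps)
  also have "\<dots> \<le> (\<Prod>j\<le>N. real (k+j)) * real (k + Suc N)"
    by (rule mult_mono) (use Suc in \<open>auto intro: prod_nonneg\<close>)
  finally show ?case by (simp add: ac_simps)
qed

lemma prod_pos: "k \<ge> 1 \<Longrightarrow> (\<Prod>j\<le>N. real (k+j)) > 0"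
  by (rule prod_pos) auto

lemma prod_one: "(\<Prod>j\<le>N. real (1+j)) = fact (Suc N)"
  by (induction N) (simp_all add: algebra_simps)

lemma tt_Suc_N: "tt (Suc N) k = tt N k * (real (Suc N))^2 / (real (k + Suc N))^2"
proof -
  have "tt (Suc N) k = (fact N * real (Suc N) / ((\<Prod>j\<le>N. real (k+j)) * real (k + Suc N)))^2"
    unfolding tt_def by (simp only: prod.atMost_Suc fact_Suc) (simp add: mult.commute)
  also have "\<dots> = tt N k * (real (Suc N))^2 / (real (k + Suc N))^2"
    unfolding tt_def by (simp only: power_divide power_mult_distrib) simp
  finally show ?thesis .
qed

lemma tt_Suc_k: assumes "k \<ge> 1"
  shows "tt N (Suc k) = tt N k * (real k)^2 / (real (k + Suc N))^2"
proof -
  have p: "(\<Prod>j\<le>N. real (k+j)) > 0" using prod_pos assms by blast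
  have k0: "real k \<noteq> 0" using assms by simp
  have q: "(\<Prod>j\<le>N. real (Suc k+j)) = (\<Prod>j\<le>N. real (k+j)) * real (k + Suc N) / real k"
    using prod_shift[where N=N and k=k] k0 by (simp only: eq_divide_eq) simp
  have "tt N (Suc k) = (fact N * real k / ((\<Prod>j\<le>N. real (k+j)) * real (k + Suc N)))^2"
    unfolding tt_def q using k0 by simp
  also have "\<dots> = tt N k * (real k)^2 / (real (k + Suc N))^2"
    unfolding tt_def by (simp only: power_divide power_mult_distrib) simp
  finally show ?thesis .
qed

lemma hh_Suc_N: "hh (Suc N) k = hh N k + 1/(real (k + Suc N))^2"
  unfolding hh_def by simp

lemma hh_Suc_k: "hh N (Suc k) = hh N k - 1/(real k)^2 + 1/(real (k + Suc N))^2"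
  unfolding hh_def by (induction N) simp_all

lemma tt_le: assumes "k \<ge> 1" shows "tt N k \<le> 1/(real k)^2"
proof -
  have p: "(\<Prod>j\<le>N. real (k+j)) > 0" using prod_pos assms by blast
  have "fact N / (\<Prod>j\<le>N. real (k+j)) \<le> fact N / (real k * fact N)"
    by (rule divide_left_mono) (use prod_ge[of k N] assms p in \<open>auto intro!: mult_pos_pos\<close>)
  also have "\<dots> = 1 / real k" by simp
  finally have "fact N / (\<Prod>j\<le>N. real (k+j)) \<le> 1/real k" .
  moreover have "0 \<le> fact N / (\<Prod>j\<le>N. real (k+j))" using p by simp
  ultimately have "(fact N / (\<Prod>j\<le>N. real (k+j)))^2 \<le> (1/real k)^2"
    by (rule power_mono)
  then show ?thesis unfolding tt_def by (simp add: power_divide)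
qed

lemma tt_nonneg: "tt N k \<ge> 0" unfolding tt_def by simp
lemma hh_nonneg: "hh N k \<ge> 0" unfolding hh_def by (simp add: sum_nonneg)
lemma hh_le: assumes "k \<ge> 1" shows "hh N k \<le> real (Suc N)"
proof -
  have "hh N k \<le> (\<Sum>j\<le>N. 1)" unfolding hh_def
    by (rule sum_mono) (use assms in \<open>auto simp: field_simps\<close>)
  then show ?thesis by simp
qed

lemma GG_Suc: "GG N (Suc k) = tt N (Suc k) * ((real k + 1) + (3*real N+1)/2)"
  unfolding GG_def by simp

lemma P1: assumes "k \<ge> 1"
  shows "(2*real N+1) * tt N k - real (Suc N)/2 * tt (Suc N) k = GG N k - GG N (Suc k)"
proof -
  have "(2*real N+1) * tt N k - real (Suc N)/2 * (tt N k * (real (Suc N))^2 / (real (k + Suc N))^2)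
    = tt N k * (real k + (3*real N+1)/2) - tt N k * (real k)^2 / (real (k + Suc N))^2 * ((real k + 1) + (3*real N+1)/2)"
    by (rule P1_alg) (use assms in auto)
  then show ?thesis unfolding GG_Suc tt_Suc_N tt_Suc_k[OF assms] by (simp only: GG_def)
qed

lemma P2: assumes "k \<ge> 1"
  shows "(2*real N+1) * tt N k * hh N k - real (Suc N)/2 * tt (Suc N) k * hh (Suc N) k
     + 2/real (Suc N) * tt (Suc N) k = GG N k * hh N k - GG N (Suc k) * hh N (Suc k)"
proof -
  have "(2*real N+1) * tt N k * hh N k - real (Suc N)/2 * (tt N k * (real (Suc N))^2 / (real (k + Suc N))^2) * (hh N k + 1/(real (k + Suc N))^2)
    + 2/real (Suc N) * (tt N k * (real (Suc N))^2 / (real (k + Suc N))^2)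
    = tt N k * (real k + (3*real N+1)/2) * hh N k - tt N k * (real k)^2 / (real (k + Suc N))^2 * ((real k + 1) + (3*real N+1)/2) * (hh N k - 1/(real k)^2 + 1/(real (k + Suc N))^2)"
    by (rule P2_alg) (use assms in auto)
  then show ?thesis unfolding GG_Suc tt_Suc_N tt_Suc_k[OF assms] hh_Suc_N hh_Suc_k by (simp only: GG_def)
qed


definition AA :: "nat \<Rightarrow> real" where "AA N = (\<Sum>i. tt N (Suc i))"
definition BB :: "nat \<Rightarrow> real" where "BB N = (\<Sum>i. tt N (Suc i) * hh N (Suc i))"

lemma summable_inv2: "summable (\<lambda>i. 1/(real (Suc i))^2)"
proof -
  have "summable (\<lambda>n. inverse (real n ^ 2))" by (rule inverse_power_summable) simp
  then have "summable (\<lambda>n. inverse (real (Suc n) ^ 2))" by (subst summable_Suc_iff)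
  then show ?thesis by (simp add: divide_inverse)
qed

lemma summable_tt: "summable (\<lambda>i. tt N (Suc i))"
  apply (rule summable_comparison_test'[OF summable_inv2, of 0])
  subgoal for n using tt_le[of "Suc n" N] tt_nonneg[of N "Suc n"] by simp
  done

lemma tth_le: "tt N (Suc i) * hh N (Suc i) \<le> real (Suc N) * (1/(real (Suc i))^2)"
proof -
  have "tt N (Suc i) * hh N (Suc i) \<le> (1/(real (Suc i))^2) * real (Suc N)"
    by (rule mult_mono) (use tt_le[of "Suc i" N] hh_le[of "Suc i" N] hh_nonneg in auto)
  then show ?thesis by (simp add: ac_simps)
qed

lemma summable_tth: "summable (\<lambda>i. tt N (Suc i) * hh N (Suc i))"
  by (rule summable_comparison_test'[OF summable_mult[OF summable_inv2, of "real (Suc N)"], of 0])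
     (use tth_le tt_nonneg hh_nonneg in auto)

lemma inv_lim: "(\<lambda>i. 1/real (Suc i)) \<longlonglongrightarrow> 0"
  using LIMSEQ_inverse_real_of_nat by (simp add: divide_inverse)

lemma GG_lim: "(\<lambda>i. GG N (Suc i)) \<longlonglongrightarrow> 0"
proof (rule Lim_null_comparison)
  let ?c = "(3*real N+1)/2"
  show "\<forall>\<^sub>F i in sequentially. norm (GG N (Suc i)) \<le> 1/real (Suc i) + ?c * (1/real (Suc i))^2"
  proof (rule always_eventually, rule allI)
    fix i
    have "norm (GG N (Suc i)) = tt N (Suc i) * (real (Suc i) + ?c)"
      unfolding GG_def using tt_nonneg by simp
    also have "\<dots> \<le> (1/(real (Suc i))^2) * (real (Suc i) + ?c)"
      by (rule mult_right_mono) (use tt_le[of "Suc i" N] in auto)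
    also have "\<dots> = 1/real (Suc i) + ?c * (1/real (Suc i))^2"
    proof -
      have "\<And>x::real. x > 0 \<Longrightarrow> (1/x^2) * (x + ?c) = 1/x + ?c*(1/x)^2"
        by (simp add: field_simps power2_eq_square)
      then show ?thesis by simp
    qed
    finally show "norm (GG N (Suc i)) \<le> 1/real (Suc i) + ?c * (1/real (Suc i))^2" .
  qed
  show "(\<lambda>i. 1/real (Suc i) + ?c * (1/real (Suc i))^2) \<longlonglongrightarrow> 0"
  proof -
    have "(\<lambda>i. (1/real (Suc i))^2) \<longlonglongrightarrow> 0" using tendsto_power[OF inv_lim, of 2] by simp
    then show ?thesis using tendsto_add[OF inv_lim tendsto_mult_right_zero[of _ _ ?c]] by simp
  qed
qed

lemma GGh_lim: "(\<lambda>i. GG N (Suc i) * hh N (Suc i)) \<longlonglongrightarrow> 0"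
proof (rule Lim_null_comparison)
  show "\<forall>\<^sub>F i in sequentially. norm (GG N (Suc i) * hh N (Suc i)) \<le> real (Suc N) * norm (GG N (Suc i))"
  proof (rule always_eventually, rule allI)
    fix i
    have "norm (GG N (Suc i) * hh N (Suc i)) = norm (GG N (Suc i)) * hh N (Suc i)"
      using hh_nonneg by (simp add: abs_mult)
    also have "\<dots> \<le> norm (GG N (Suc i)) * real (Suc N)"
      by (rule mult_left_mono) (use hh_le[of "Suc i" N] in auto)
    finally show "norm (GG N (Suc i) * hh N (Suc i)) \<le> real (Suc N) * norm (GG N (Suc i))"
      by (simp add: ac_simps)
  qed
  show "(\<lambda>i. real (Suc N) * norm (GG N (Suc i))) \<longlonglongrightarrow> 0"
    using tendsto_mult_right_zero[OF tendsto_norm_zero[OF GG_lim]] by simp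
qed

lemma tt_one: "tt N 1 = 1/(real (Suc N))^2"
proof -
  have "(\<Prod>j\<le>N. real (1+j)) = fact (Suc N)" by (rule prod_one)
  then show ?thesis unfolding tt_def by (simp add: power_divide)
qed

lemma GG_one: "GG N 1 = 3/(2*real (Suc N))"
proof -
  have e: "\<And>x::real. x > 0 \<Longrightarrow> 1/x^2 * (3*x/2) = 3/(2*x)"
    by (simp add: field_simps power2_eq_square)
  have "GG N 1 = 1/(real (Suc N))^2 * (3*real (Suc N)/2)"
    unfolding GG_def tt_one by (simp add: field_simps)
  also have "\<dots> = 3/(2*real (Suc N))" by (rule e) simp
  finally show ?thesis .
qed

lemma hh_one: "hh N 1 = H2 (Suc N)"
  unfolding hh_def H2_def lessThan_Suc_atMost by simp

lemma S1: "(2*real N+1) * AA N - real (Suc N)/2 * AA (Suc N) = 3/(2*real (Suc N))"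
proof -
  have a: "(\<lambda>i. (2*real N+1) * tt N (Suc i) - real (Suc N)/2 * tt (Suc N) (Suc i)) sums
      ((2*real N+1) * AA N - real (Suc N)/2 * AA (Suc N))"
    unfolding AA_def by (intro sums_diff sums_mult summable_sums summable_tt)
  have b: "(\<lambda>i. GG N (Suc i) - GG N (Suc (Suc i))) sums (GG N 1 - 0)"
    using telescope_sums'[OF GG_lim[of N]] by simp
  have "(\<lambda>i. (2*real N+1) * tt N (Suc i) - real (Suc N)/2 * tt (Suc N) (Suc i)) =
        (\<lambda>i. GG N (Suc i) - GG N (Suc (Suc i)))"
    using P1 by auto
  then have "(2*real N+1) * AA N - real (Suc N)/2 * AA (Suc N) = GG N 1 - 0"
    using sums_unique2 a b by simp
  then show ?thesis using GG_one by simp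
qed

lemma S2: "(2*real N+1) * BB N - real (Suc N)/2 * BB (Suc N) + 2/real (Suc N) * AA (Suc N)
   = 3/(2*real (Suc N)) * H2 (Suc N)"
proof -
  have a: "(\<lambda>i. (2*real N+1) * (tt N (Suc i) * hh N (Suc i)) - real (Suc N)/2 * (tt (Suc N) (Suc i) * hh (Suc N) (Suc i))
       + 2/real (Suc N) * tt (Suc N) (Suc i)) sums
      ((2*real N+1) * BB N - real (Suc N)/2 * BB (Suc N) + 2/real (Suc N) * AA (Suc N))"
    unfolding AA_def BB_def by (intro sums_add sums_diff sums_mult summable_sums summable_tt summable_tth)
  have b: "(\<lambda>i. GG N (Suc i) * hh N (Suc i) - GG N (Suc (Suc i)) * hh N (Suc (Suc i))) sums (GG N 1 * hh N 1 - 0)"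
    using telescope_sums'[OF GGh_lim[of N]] by simp
  have "(\<lambda>i. (2*real N+1) * (tt N (Suc i) * hh N (Suc i)) - real (Suc N)/2 * (tt (Suc N) (Suc i) * hh (Suc N) (Suc i))
       + 2/real (Suc N) * tt (Suc N) (Suc i)) =
        (\<lambda>i. GG N (Suc i) * hh N (Suc i) - GG N (Suc (Suc i)) * hh N (Suc (Suc i)))"
  proof
    fix i
    show "(2*real N+1) * (tt N (Suc i) * hh N (Suc i)) - real (Suc N)/2 * (tt (Suc N) (Suc i) * hh (Suc N) (Suc i))
       + 2/real (Suc N) * tt (Suc N) (Suc i) = GG N (Suc i) * hh N (Suc i) - GG N (Suc (Suc i)) * hh N (Suc (Suc i))"
      using P2[of "Suc i" N] by (simp only: mult.assoc)
  qed
  then have "(2*real N+1) * BB N - real (Suc N)/2 * BB (Suc N) + 2/real (Suc N) * AA (Suc N) = GG N 1 * hh N 1 - 0"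
    using sums_unique2 a b by simp
  then show ?thesis using GG_one hh_one by simp
qed

lemma AA0: "AA 0 = riemann_zeta 2"
  unfolding AA_def riemann_zeta_def tt_def by (simp add: power_divide)

lemma BB0: "BB 0 = riemann_zeta 4"
  unfolding BB_def riemann_zeta_def tt_def hh_def
  by (simp add: power_divide)

lemma AA_nonneg: "AA N \<ge> 0" unfolding AA_def by (intro suminf_nonneg summable_tt tt_nonneg)
lemma BB_nonneg: "BB N \<ge> 0" unfolding BB_def
  by (intro suminf_nonneg summable_tth mult_nonneg_nonneg tt_nonneg hh_nonneg)
lemma AA_le: "AA N \<le> riemann_zeta 2"
proof -
  have "AA N \<le> (\<Sum>i. 1/(real (Suc i))^2)" unfolding AA_def
    apply (rule suminf_le)
    subgoal for n using tt_le[of "Suc n" N] by simp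
    using summable_tt summable_inv2 by auto
  also have "\<dots> = riemann_zeta 2" unfolding riemann_zeta_def by simp
  finally show ?thesis .
qed
lemma BB_le: "BB N \<le> real (Suc N) * riemann_zeta 2"
proof -
  have "BB N \<le> (\<Sum>i. real (Suc N) * (1/(real (Suc i))^2))" unfolding BB_def
    by (rule suminf_le) (use tth_le summable_tth summable_mult[OF summable_inv2] in auto)
  also have "\<dots> = real (Suc N) * riemann_zeta 2" unfolding riemann_zeta_def
    by (subst suminf_mult[OF summable_inv2]) simp
  finally show ?thesis .
qed


lemma alg_all: assumes "(m::real) > 0" "c = 2*m-1" "c*A - m/2*A' = 3/(2*m)"
  "c*B - m/2*B' + 2/m*A' = 3/(2*m) * (H + 1/m^2)"
  shows "D*(-3/(2*m*(2*m+1))) + (-3*D*H)*(m/(2*(2*m+1))) = -3*(D*(m/(2*(2*m+1))))*(H + 1/m^2)"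
   and "D*(3/(2*m)) + (z2 - c*D*A) = z2 - (2*m+1)*(D*(m/(2*(2*m+1))))*A'"
   and "D*(3/(2*m^3)) + (-3*D*H)*(3/(2*m)) + (z4 - c*D*(B - 4*H*A))
     = z4 - (2*m+1)*(D*(m/(2*(2*m+1))))*(B' - 4*(H+1/m^2)*A')"
proof -
  define im where "im = 1/m"
  define iq where "iq = 1/(2*m+1)"
  have n: "2*m+1 \<noteq> 0" "m \<noteq> 0" using assms by auto
  have i1: "m*im = 1" "(2*m+1)*iq = 1" unfolding im_def iq_def using n by auto
  have r: "-3/(2*m*(2*m+1)) = -3/2*im*iq" "m/(2*(2*m+1)) = m/2*iq" "1/m^2 = im^2"
     "3/(2*m^3) = 3/2*im^3" "3/(2*m) = 3/2*im" "2/m = 2*im"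
    unfolding im_def iq_def using n by (simp_all add: field_simps power2_eq_square power3_eq_cube)
  have hA: "c*A - m/2*A' = 3/2*im" using assms(3) r by simp
  have hB: "c*B - m/2*B' + 2*im*A' = 3/2*im * (H + im^2)" using assms(4) r by simp
  show "D*(-3/(2*m*(2*m+1))) + (-3*D*H)*(m/(2*(2*m+1))) = -3*(D*(m/(2*(2*m+1))))*(H + 1/m^2)"
    unfolding r using i1 by algebra
  show "D*(3/(2*m)) + (z2 - c*D*A) = z2 - (2*m+1)*(D*(m/(2*(2*m+1))))*A'"
    unfolding r using i1 hA by algebra
  show "D*(3/(2*m^3)) + (-3*D*H)*(3/(2*m)) + (z4 - c*D*(B - 4*H*A))
     = z4 - (2*m+1)*(D*(m/(2*(2*m+1))))*(B' - 4*(H+1/m^2)*A')"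
    unfolding r using i1 hA hB assms(2) by algebra
qed

fun DD :: "nat \<Rightarrow> real" where
  "DD 0 = 1"
| "DD (Suc n) = DD n * (real (Suc n) / (2*(2*real (Suc n)+1)))"

definition FF :: "nat \<Rightarrow> real^3^3" where
  "FF N = vector [vector [DD N, -3*DD N*H2 N, riemann_zeta 4 - (2*real N+1)*DD N*(BB N - 4*H2 N*AA N)],
                  vector [0, DD N, riemann_zeta 2 - (2*real N+1)*DD N*AA N],
                  vector [0, 0, 1]]"

lemma H2_Suc: "H2 (Suc N) = H2 N + 1/(real (Suc N))^2"
  unfolding H2_def by simp

lemma FF_step: "FF N ** Mmat (Suc N) = FF (Suc N)"
proof -
  let ?m = "real (Suc N)"
  have m: "?m > 0" "2*real N+1 = 2*?m-1" by auto
  have S1': "(2*real N+1) * AA N - ?m/2 * AA (Suc N) = 3/(2*?m)" by (rule S1)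
  have S2': "(2*real N+1) * BB N - ?m/2 * BB (Suc N) + 2/?m * AA (Suc N) = 3/(2*?m) * (H2 N + 1/?m^2)"
    using S2[of N] unfolding H2_Suc .
  note E = alg_all(1)[OF m(1) m(2) S1' S2', of "DD N"]
    alg_all(2)[OF m(1) m(2) S1' S2', of "DD N" "riemann_zeta 2"]
    alg_all(3)[OF m(1) m(2) S1' S2', of "DD N" "riemann_zeta 4"]
  show ?thesis
    apply (simp only: vec_eq_iff forall_3 matrix_matrix_mult_def vec_lambda_beta sum_3)
    apply (simp only: FF_def Mmat_def Let_def vector_3 DD.simps H2_Suc)
    using E by simp
qed

lemma Mprod_FF: "Mprod N = FF N"
proof (induction N)
  case 0
  show ?case
    by (simp add: vec_eq_iff forall_3 mat_def FF_def AA0 BB0 H2_def)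
next
  case (Suc N)
  then show ?case using FF_step by simp
qed

lemma DD_bounds: "0 \<le> DD N \<and> DD N \<le> (1/4)^N"
proof (induction N)
  case 0 then show ?case by simp
next
  case (Suc N)
  let ?a = "real (Suc N) / (2*(2*real (Suc N)+1))"
  have a: "0 \<le> ?a" "?a \<le> 1/4" by (auto simp: field_simps)
  have "DD N * ?a \<le> (1/4)^N * (1/4)"
    by (rule mult_mono) (use Suc a in auto)
  then show ?case using Suc a by (simp add: ac_simps)
qed

lemma H2_bounds: "0 \<le> H2 N \<and> H2 N \<le> real N"
proof -
  have "H2 N \<le> (\<Sum>j<N. 1)" unfolding H2_def
    by (rule sum_mono) (auto simp: field_simps)
  moreover have "0 \<le> H2 N" unfolding H2_def by (rule sum_nonneg) simp
  ultimately show ?thesis by simp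
qed

definition g :: "nat \<Rightarrow> real" where "g N = (2*real N+1)*(5*real N+1)*(1/4)^N"

lemma g_lim: "g \<longlonglongrightarrow> 0"
proof -
  have q: "((1/2::real)^N)^2 = (1/4)^N" for N
  proof -
    have "((1/2::real)^N)^2 = ((1/2)*(1/2))^N" by (simp only: power2_eq_square power_mult_distrib)
    then show ?thesis by simp
  qed
  have e: "g = (\<lambda>N. 10*(real N*(1/2)^N)^2 + 7*(real N*(1/4)^N) + (1/4)^N)"
  proof -
    have q': "(1/2::real)^N * (1/2)^N = (1/4)^N" for N using q[of N] by (simp only: power2_eq_square)
    show ?thesis unfolding g_def by (rule ext) (simp add: power_mult_distrib q' algebra_simps power2_eq_square)
  qed
  have l1: "(\<lambda>N. real N*(1/2::real)^N) \<longlonglongrightarrow> 0" by (rule powser_times_n_limit_0) simp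
  have l2: "(\<lambda>N. real N*(1/4::real)^N) \<longlonglongrightarrow> 0" by (rule powser_times_n_limit_0) simp
  have l3: "(\<lambda>N. (1/4::real)^N) \<longlonglongrightarrow> 0" by (rule LIMSEQ_power_zero) simp
  have "(\<lambda>N. 10*(real N*(1/2)^N)^2 + 7*(real N*(1/4)^N) + (1/4::real)^N) \<longlonglongrightarrow> 10*0^2 + 7*0 + 0"
    by (intro tendsto_intros l1 l2 l3)
  then show ?thesis unfolding e by simp
qed

lemma g_ge: "(2*real N+1)*(1/4)^N \<le> g N" "real N * (1/4)^N \<le> g N" "(1/4)^N \<le> g N"
proof -
  have p: "(0::real) \<le> (1/4)^N" by simp
  show "(2*real N+1)*(1/4)^N \<le> g N" unfolding g_def
    using mult_right_mono[of "(2*real N+1)*1" "(2*real N+1)*(5*real N+1)", OF _ p] by simp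
  show "real N * (1/4)^N \<le> g N" unfolding g_def
    using mult_right_mono[of "real N" "(2*real N+1)*(5*real N+1)", OF _ p]
    by (simp add: algebra_simps)
  show "(1/4)^N \<le> g N" unfolding g_def
    using mult_right_mono[of "1" "(2*real N+1)*(5*real N+1)", OF _ p]
    by (simp add: algebra_simps)
qed

lemma z2_nonneg: "riemann_zeta 2 \<ge> 0" using AA_le[of 0] AA_nonneg[of 0] by simp

lemma lim_DD: "DD \<longlonglongrightarrow> 0"
proof (rule Lim_null_comparison[OF always_eventually g_lim], rule allI)
  fix N show "norm (DD N) \<le> g N" using DD_bounds[of N] g_ge(3)[of N] by simp
qed

lemma lim_12: "(\<lambda>N. -3*DD N*H2 N) \<longlonglongrightarrow> 0"
proof (rule Lim_null_comparison[OF always_eventually tendsto_mult_right_zero[OF g_lim, of 3]], rule allI)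
  fix N
  have "DD N * H2 N \<le> (1/4)^N * real N"
    by (rule mult_mono) (use DD_bounds[of N] H2_bounds[of N] in auto)
  then show "norm (-3*DD N*H2 N) \<le> 3 * g N"
    using g_ge(2)[of N] DD_bounds[of N] H2_bounds[of N] by (simp add: abs_mult ac_simps)
qed

lemma lim_23: "(\<lambda>N. (2*real N+1)*DD N*AA N) \<longlonglongrightarrow> 0"
proof (rule Lim_null_comparison[OF always_eventually tendsto_mult_right_zero[OF g_lim, of "riemann_zeta 2"]], rule allI)
  fix N
  have "(2*real N+1)*DD N*AA N \<le> ((2*real N+1)*(1/4)^N) * riemann_zeta 2"
    by (rule mult_mono) (use DD_bounds[of N] AA_le[of N] AA_nonneg[of N] in auto)
  also have "\<dots> \<le> riemann_zeta 2 * g N"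
    using mult_left_mono[OF g_ge(1)[of N] z2_nonneg] by (simp add: ac_simps)
  finally show "norm ((2*real N+1)*DD N*AA N) \<le> riemann_zeta 2 * g N"
    using DD_bounds[of N] AA_nonneg[of N] by simp
qed

lemma lim_13: "(\<lambda>N. (2*real N+1)*DD N*(BB N - 4*H2 N*AA N)) \<longlonglongrightarrow> 0"
proof (rule Lim_null_comparison[OF always_eventually tendsto_mult_right_zero[OF g_lim, of "riemann_zeta 2"]], rule allI)
  fix N
  have h1: "\<bar>BB N - 4*H2 N*AA N\<bar> \<le> BB N + 4*H2 N*AA N"
  proof -
    have "0 \<le> H2 N * AA N" using H2_bounds[of N] AA_nonneg[of N] by simp
    then show ?thesis using BB_nonneg[of N] by arith
  qed
  have h2: "H2 N * AA N \<le> real N * riemann_zeta 2"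
    by (rule mult_mono) (use H2_bounds[of N] AA_le[of N] AA_nonneg[of N] in auto)
  have h3: "\<bar>BB N - 4*H2 N*AA N\<bar> \<le> (5*real N+1) * riemann_zeta 2"
    using h1 h2 BB_le[of N] by (simp add: algebra_simps)
  have "norm ((2*real N+1)*DD N*(BB N - 4*H2 N*AA N)) = ((2*real N+1)*DD N)*\<bar>BB N - 4*H2 N*AA N\<bar>"
    using DD_bounds[of N] by (simp add: abs_mult)
  also have "\<dots> \<le> ((2*real N+1)*(1/4)^N) * ((5*real N+1) * riemann_zeta 2)"
    by (rule mult_mono) (use DD_bounds[of N] h3 in auto)
  also have "\<dots> = riemann_zeta 2 * g N" unfolding g_def by (simp add: ac_simps)
  finally show "norm ((2*real N+1)*DD N*(BB N - 4*H2 N*AA N)) \<le> riemann_zeta 2 * g N" .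
qed

theorem mainTheorem3:
  shows "Mprod \<longlonglongrightarrow>
    vector [vector [0, 0, riemann_zeta 4], vector [0, 0, riemann_zeta 2], vector [0, 0, 1]]"
proof -
  have e: "Mprod = FF" using Mprod_FF by auto
  have r1: "(\<lambda>N. riemann_zeta 4 - (2*real N+1)*DD N*(BB N - 4*H2 N*AA N)) \<longlonglongrightarrow> riemann_zeta 4 - 0"
    by (intro tendsto_diff tendsto_const lim_13)
  have r2: "(\<lambda>N. riemann_zeta 2 - (2*real N+1)*DD N*AA N) \<longlonglongrightarrow> riemann_zeta 2 - 0"
    by (intro tendsto_diff tendsto_const lim_23)
  show ?thesis unfolding e
  proof (rule vec_tendstoI)
    fix i :: 3
    show "(\<lambda>N. FF N $ i) \<longlonglongrightarrow> vector [vector [0, 0, riemann_zeta 4], vector [0, 0, riemann_zeta 2], vector [0, 0, 1]] $ i"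
    proof (rule vec_tendstoI)
      fix j :: 3
      show "(\<lambda>N. FF N $ i $ j) \<longlonglongrightarrow> vector [vector [0, 0, riemann_zeta 4], vector [0, 0, riemann_zeta 2], vector [0, 0, 1 :: real]] $ i $ j"
        using exhaust_3[of i] exhaust_3[of j] lim_DD lim_12 r1 r2
        by (auto simp: FF_def)
    qed
  qed
qed

end
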